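(* Let $\mathbf{x}\in\mathbb{R}^d$, $\mathbf{x}\neq 0$, and consider the training set $\{(\mathbf{x},1),(-\mathbf{x},-1)\}$. (1) Let $k$ be the FC-NTK kernel defined below, and $g_k$ its minimum norm interpolant on this training set. Then for all $\mathbf{z}\in\mathbb{R}^d$, $g_k(\mathbf{z})\ge 0$ if and only if $\mathbf{z}^T\mathbf{x}\ge 0$. (2) Let $K$ be the CNTK-GAP kernel defined below (with patch size $q$, $1\le q\le d$), and assume the $2\times 2$ Gram matrix $H_K$ of $K$ on $\{\mathbf{x},-\mathbf{x}\}$ is invertible. Then either for all $\mathbf{z}\in\mathbb{R}^d$ [$g_K(\mathbf{z})\ge 0$ iff $\mathbf{z}^T\mathbf{1}_d\ge 0$], or for all $\mathbf{z}\in\mathbb{R}^d$ [$g_K(\mathbf{z})\ge 0$ iff $\mathbf{z}^T\mathbf{1}_d\le 0$]; i.e., the hyperplane $\mathbf{z}^T\mathbf{1}_d=0$ is the decision boundary.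
   Context: FC-NTK (NTK of the bias-free two-layer ReLU network $\mathbf{v}^T\sigma(W\mathbf{x})$ with Gaussian initialization): for $\mathbf{z},\mathbf{x}\in\mathbb{R}^n$, $k(\mathbf{z},\mathbf{x})=\frac{1}{\pi}\left(2\mathbf{z}^T\mathbf{x}(\pi-\phi)+\|\mathbf{z}\|\|\mathbf{x}\|\sin\phi\right)$, where $\phi=\arccos\left(\frac{\mathbf{z}^T\mathbf{x}}{\|\mathbf{z}\|\|\mathbf{x}\|}\right)$ is the angle between $\mathbf{z}$ and $\mathbf{x}$ (with $k=0$ if either argument is $0$). CNTK-GAP (for the bias-free two-layer circular-convolution network with global average pooling, filter size $q$): for $\mathbf{z},\mathbf{x}\in\mathbb{R}^d$ let $\bar{\mathbf{z}}_i=(z_i,z_{(i+1)\bmod d},\dots,z_{(i+q-1)\bmod d})^T\in\mathbb{R}^q$ be the cyclic patches ($1\le i\le d$, indices interpreted cyclically in $\{1,\dots,d\}$), similarly $\bar{\mathbf{x}}_j$; then $K(\mathbf{z},\mathbf{x})=\frac{1}{d^2}\sum_{i=1}^d\sum_{j=1}^d k(\bar{\mathbf{z}}_i,\bar{\mathbf{x}}_j)$ with $k$ the FC-NTK on $\mathbb{R}^q$. For a kernel $k$ and training data $\{(\mathbf{x}_i,y_i)\}_{i=1}^n$ with invertible Gram matrix $H_k=(k(\mathbf{x}_i,\mathbf{x}_j))_{i,j}$, the minimum norm interpolant (limit $\lambda\to 0$ of kernel ridge regression) is $g_k(\mathbf{z})=(k(\mathbf{z},\mathbf{x}_1),\dots,k(\mathbf{z},\mathbf{x}_n))H_k^{-1}\mathbf{y}$,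 $\mathbf{y}=(y_1,\dots,y_n)^T$. $\mathbf{1}_d$ is the all-ones vector. *)

theory Defs
  imports "HOL-Analysis.Analysis"
begin

text \<open>Vectors in R^n are represented as functions nat => real, only the
coordinates 0..n-1 being relevant (0-indexed).\<close>

definition ip :: "nat \<Rightarrow> (nat \<Rightarrow> real) \<Rightarrow> (nat \<Rightarrow> real) \<Rightarrow> real" where
  "ip n z x = (\<Sum>i<n. z i * x i)"

definition vnorm :: "nat \<Rightarrow> (nat \<Rightarrow> real) \<Rightarrow> real" where
  "vnorm n z = sqrt (ip n z z)"

definition fc_ntk :: "nat \<Rightarrow> (nat \<Rightarrow> real) \<Rightarrow> (nat \<Rightarrow> real) \<Rightarrow> real" where
  "fc_ntk n z x =
     (if vnorm n z = 0 \<or> vnorm n x = 0 then 0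
      else (let \<phi> = arccos (ip n z x / (vnorm n z * vnorm n x))
            in (1 / pi) * (2 * ip n z x * (pi - \<phi>) + vnorm n z * vnorm n x * sin \<phi>)))"

definition patch :: "nat \<Rightarrow> nat \<Rightarrow> (nat \<Rightarrow> real) \<Rightarrow> nat \<Rightarrow> (nat \<Rightarrow> real)" where
  "patch d q z i = (\<lambda>j. z ((i + j) mod d))"

definition cntk_gap :: "nat \<Rightarrow> nat \<Rightarrow> (nat \<Rightarrow> real) \<Rightarrow> (nat \<Rightarrow> real) \<Rightarrow> real" where
  "cntk_gap d q z x =
     (1 / (real d)^2) * (\<Sum>i<d. \<Sum>j<d. fc_ntk q (patch d q z i) (patch d q x j))"

definition gram :: "('a \<Rightarrow> 'a \<Rightarrow> real) \<Rightarrow> ('m::finite \<Rightarrow> 'a) \<Rightarrow> real^'m^'m" where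
  "gram k X = (\<chi> i j. k (X i) (X j))"

definition min_norm_interp ::
  "('a \<Rightarrow> 'a \<Rightarrow> real) \<Rightarrow> ('m::finite \<Rightarrow> 'a) \<Rightarrow> real^'m \<Rightarrow> 'a \<Rightarrow> real" where
  "min_norm_interp k X Y z = (\<chi> i. k z (X i)) \<bullet> (matrix_inv (gram k X) *v Y)"

definition train_X :: "(nat \<Rightarrow> real) \<Rightarrow> 2 \<Rightarrow> (nat \<Rightarrow> real)" where
  "train_X x = (\<lambda>i. if i = 0 then x else (\<lambda>j. - x j))"

definition train_Y :: "real^2" where
  "train_Y = (\<chi> i. if i = 0 then 1 else -1)"

end

theory Submission
  imports Defs
begin
lemma two_cases: "(i::2) = 0 \<or> i = 1"
proof -
  have "(2::2) = 0" by simp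
  then show ?thesis using exhaust_2[of i] by metis
qed
lemma univ2: "(UNIV::2 set) = {0,1}"
  using two_cases by auto

lemma inv_left: "invertible (A::real^'n^'n) \<Longrightarrow> matrix_inv A ** A = mat 1"
  unfolding invertible_def matrix_inv_def by (metis (mono_tags, lifting) someI_ex)

lemma diag_inv: "(a::real) \<noteq> 0 \<Longrightarrow> invertible (\<chi> i j. if i = (j::2) then a else 0)"
  unfolding invertible_left_inverse
  apply (rule exI[of _ "\<chi> i j. if i = (j::2) then 1/a else 0"])
  apply (auto simp: vec_eq_iff matrix_matrix_mult_def mat_def univ2)
  using two_cases by blast

lemma interp2:
  fixes k :: "'a \<Rightarrow> 'a \<Rightarrow> real" and X :: "2 \<Rightarrow> 'a"
  assumes inv: "invertible (gram k X)"
    and c1: "k (X 0) (X 0) - k (X 0) (X 1) = c"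
    and c2: "k (X 1) (X 1) - k (X 1) (X 0) = c"
  shows "c \<noteq> 0 \<and> min_norm_interp k X train_Y z = (k z (X 0) - k z (X 1)) / c"
proof -
  let ?H = "gram k X"
  have HY: "?H *v train_Y = c *s train_Y"
  proof (subst vec_eq_iff, intro allI)
    fix i :: 2
    show "(?H *v train_Y) $ i = (c *s train_Y) $ i"
      using two_cases[of i] c1 c2
      by (elim disjE) (auto simp: matrix_vector_mult_def gram_def train_Y_def univ2)
  qed
  have L: "matrix_inv ?H *v (?H *v v) = v" for v
    by (simp add: matrix_vector_mul_assoc inv_left[OF inv])
  have cnz: "c \<noteq> 0"
  proof
    assume "c = 0"
    then have "?H *v train_Y = 0" using HY by simp
    then have "train_Y = 0" using L[of train_Y] by simp
    then have "train_Y $ 0 = 0" by simp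
    then show False unfolding train_Y_def by simp
  qed
  have "?H *v ((1/c) *s train_Y) = train_Y"
    using HY cnz by (simp add: vector_scalar_commute vector_smult_assoc)
  then have W: "matrix_inv ?H *v train_Y = (1/c) *s train_Y"
    using L by metis
  show ?thesis using cnz
    unfolding min_norm_interp_def W
    by (simp add: inner_vec_def univ2 train_Y_def diff_divide_distrib)
qed

lemma ip_neg_r: "ip n z (\<lambda>j. - x j) = - ip n z x"
  by (simp add: ip_def sum_negf)
lemma ip_neg_l: "ip n (\<lambda>j. - x j) z = - ip n x z"
  by (simp add: ip_def sum_negf)
lemma ip_self_nonneg: "ip n z z \<ge> 0"
  by (simp add: ip_def sum_nonneg)
lemma vnorm_neg: "vnorm n (\<lambda>j. - x j) = vnorm n x"
  by (simp add: vnorm_def ip_def)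
lemma vnorm_nonneg: "vnorm n z \<ge> 0"
  by (simp add: vnorm_def ip_self_nonneg)
lemma vnorm_sq: "vnorm n z * vnorm n z = ip n z z"
  by (simp add: vnorm_def ip_self_nonneg)
lemma vnorm0_ip: assumes "vnorm n z = 0" shows "ip n z x = 0"
proof -
  have "ip n z z = 0" using vnorm_sq[of n z] assms by simp
  then have "\<forall>i\<in>{..<n}. z i * z i = 0" unfolding ip_def
    by (subst sum_nonneg_eq_0_iff[symmetric]) auto
  then show ?thesis by (simp add: ip_def)
qed
lemma ip_comm: "ip n z x = ip n x z" by (simp add: ip_def mult.commute)
lemma cs: "\<bar>ip n z x\<bar> \<le> vnorm n z * vnorm n x"
proof -
  have "(ip n z x)^2 \<le> ip n z z * ip n x x"
    using Cauchy_Schwarz_ineq_sum[of z x "{..<n}"] by (simp add: ip_def power2_eq_square)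
  then have "sqrt ((ip n z x)^2) \<le> sqrt (ip n z z * ip n x x)"
    using real_sqrt_le_mono by blast
  then show ?thesis by (simp add: vnorm_def real_sqrt_mult)
qed

lemma fc_eval: "vnorm n z \<noteq> 0 \<Longrightarrow> vnorm n x \<noteq> 0 \<Longrightarrow> fc_ntk n z x =
  (1/pi) * (2 * ip n z x * (pi - arccos (ip n z x / (vnorm n z * vnorm n x)))
     + vnorm n z * vnorm n x * sin (arccos (ip n z x / (vnorm n z * vnorm n x))))"
  unfolding fc_ntk_def Let_def by simp

lemma fc_diff: "fc_ntk n z x - fc_ntk n z (\<lambda>j. - x j) = 2 * ip n z x"
proof (cases "vnorm n z = 0 \<or> vnorm n x = 0")
  case True
  then have "ip n z x = 0" using vnorm0_ip ip_comm by metis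
  then show ?thesis using True by (auto simp: fc_ntk_def vnorm_neg)
next
  case False
  define a where "a = vnorm n z * vnorm n x"
  have apos: "a > 0" using False vnorm_nonneg[of n z] vnorm_nonneg[of n x] unfolding a_def
    by (simp add: less_le)
  define t where "t = ip n z x / a"
  have "\<bar>t\<bar> \<le> 1" using cs[of n z x] apos unfolding t_def a_def[symmetric]
    by (simp add: abs_div divide_le_eq_1)
  then have ac: "arccos (- t) = pi - arccos t" by (intro arccos_minus) auto
  have e1: "fc_ntk n z x = (1/pi) * (2 * ip n z x * (pi - arccos t) + a * sin (arccos t))"
    using False fc_eval[of n z x] unfolding a_def t_def by simp
  have e2: "fc_ntk n z (\<lambda>j. - x j) = (1/pi) * (2 * (- ip n z x) * (pi - arccos (-t)) + a * sin (arccos (-t)))"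
  proof -
    have m: "- ip n z x / a = - t" unfolding t_def by simp
    have "vnorm n (\<lambda>j. - x j) \<noteq> 0" using False vnorm_neg by metis
    from fc_eval[OF _ this, of z] False show ?thesis
      unfolding ip_neg_r vnorm_neg a_def[symmetric] m by simp
  qed
  have "fc_ntk n z x - fc_ntk n z (\<lambda>j. - x j) = (1/pi) * (2 * ip n z x * pi)"
    unfolding e1 e2 ac sin_pi_minus by (simp add: right_diff_distrib distrib_left)
  then show ?thesis by simp
qed

lemma fc_self: "fc_ntk n z z = 2 * ip n z z"
proof (cases "vnorm n z = 0")
  case True
  then show ?thesis by (simp add: fc_ntk_def vnorm0_ip)
next
  case False
  then have "ip n z z \<noteq> 0" by (simp add: vnorm_def)
  then have "ip n z z / (vnorm n z * vnorm n z) = 1" using vnorm_sq[of n z] by simp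
  then show ?thesis using False fc_eval[of n z z] by simp
qed

lemma rot1: "(\<Sum>i<d. g ((i + 1) mod (d::nat))) = (\<Sum>i<d. (g i :: real))"
proof (cases d)
  case 0 then show ?thesis by simp
next
  case (Suc m)
  have "(\<Sum>i<Suc m. g ((i + 1) mod Suc m)) = (\<Sum>i<m. g ((i + 1) mod Suc m)) + g 0"
    by simp
  also have "(\<Sum>i<m. g ((i + 1) mod Suc m)) = (\<Sum>i<m. g (Suc i))"
    by (intro sum.cong) auto
  also have "(\<Sum>i<m. g (Suc i)) + g 0 = (\<Sum>i<Suc m. g i)"
    using sum.lessThan_Suc_shift[of g m] by linarith
  finally show ?thesis using Suc by simp
qed

lemma rot: "(\<Sum>i<d. f ((i + (l::nat)) mod (d::nat))) = (\<Sum>i<d. (f i :: real))"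
proof (induction l)
  case 0
  have "(\<Sum>i<d. f (i mod d)) = (\<Sum>i<d. f i)" by (intro sum.cong) auto
  then show ?case by simp
next
  case (Suc l)
  have "(\<Sum>i<d. f ((i + Suc l) mod d)) = (\<Sum>i<d. (\<lambda>j. f ((j + l) mod d)) ((i + 1) mod d))"
  proof (intro sum.cong refl)
    fix i assume "i \<in> {..<d}"
    have "((i + 1) mod d + l) mod d = (i + 1 + l) mod d" by (rule mod_add_left_eq)
    then show "f ((i + Suc l) mod d) = (\<lambda>j. f ((j + l) mod d)) ((i + 1) mod d)" by simp
  qed
  also have "\<dots> = (\<Sum>i<d. f ((i + l) mod d))" by (rule rot1)
  finally show ?case using Suc by simp
qed

lemma patch_sum: "(\<Sum>i<d. \<Sum>j<d. ip q (patch d q z i) (patch d q x j))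
   = real q * (\<Sum>i<d. z i) * (\<Sum>i<d. x i)"
proof -
  have "(\<Sum>i<d. \<Sum>j<d. ip q (patch d q z i) (patch d q x j))
     = (\<Sum>i<d. \<Sum>j<d. \<Sum>l<q. z ((i + l) mod d) * x ((j + l) mod d))"
    by (simp add: ip_def patch_def)
  also have "\<dots> = (\<Sum>i<d. \<Sum>l<q. \<Sum>j<d. z ((i + l) mod d) * x ((j + l) mod d))"
    by (intro sum.cong refl sum.swap)
  also have "\<dots> = (\<Sum>l<q. \<Sum>i<d. \<Sum>j<d. z ((i + l) mod d) * x ((j + l) mod d))"
    by (rule sum.swap)
  also have "\<dots> = (\<Sum>l<q. (\<Sum>i<d. z ((i + l) mod d)) * (\<Sum>j<d. x ((j + l) mod d)))"
    by (simp only: sum_product)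
  also have "\<dots> = (\<Sum>l<q. (\<Sum>i<d. z i) * (\<Sum>i<d. x i))"
    by (simp only: rot)
  finally show ?thesis by simp
qed

lemma cntk_diff: "cntk_gap d q z x - cntk_gap d q z (\<lambda>j. - x j)
   = 2 * real q * (\<Sum>i<d. z i) * (\<Sum>i<d. x i) / (real d)^2"
proof -
  have "cntk_gap d q z x - cntk_gap d q z (\<lambda>j. - x j)
     = (1 / (real d)^2) * (\<Sum>i<d. \<Sum>j<d. fc_ntk q (patch d q z i) (patch d q x j)
          - fc_ntk q (patch d q z i) (\<lambda>l. - patch d q x j l))"
    by (simp add: cntk_gap_def sum_subtractf right_diff_distrib patch_def)
  also have "\<dots> = (1 / (real d)^2) * (\<Sum>i<d. \<Sum>j<d. 2 * ip q (patch d q z i) (patch d q x j))"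
    by (simp only: fc_diff)
  also have "\<dots> = (1 / (real d)^2) * (2 * (real q * (\<Sum>i<d. z i) * (\<Sum>i<d. x i)))"
    by (simp only: sum_distrib_left[symmetric] patch_sum)
  finally show ?thesis by simp
qed

lemma tX0: "train_X x 0 = x" by (simp add: train_X_def)
lemma tX1: "train_X x 1 = (\<lambda>j. - x j)" by (simp add: train_X_def)

lemma neg_neg_fun: "(\<lambda>j. - (- (x::nat\<Rightarrow>real) j)) = x" by simp

lemma sign_helper: "(c::real) > 0 \<Longrightarrow> p > 0 \<Longrightarrow> (0 \<le> p * t / c) \<longleftrightarrow> (0 \<le> t)"
  by (simp add: zero_le_divide_iff zero_le_mult_iff)

theorem theorem2:
  fixes d q :: nat and x :: "nat \<Rightarrow> real"
  assumes xnz: "\<exists>i<d. x i \<noteq> 0"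
  shows "(\<forall>z. min_norm_interp (fc_ntk d) (train_X x) train_Y z \<ge> 0 \<longleftrightarrow> ip d z x \<ge> 0)
       \<and> ((1 \<le> q \<and> q \<le> d \<and> invertible (gram (cntk_gap d q) (train_X x))) \<longrightarrow>
           ((\<forall>z. min_norm_interp (cntk_gap d q) (train_X x) train_Y z \<ge> 0
                   \<longleftrightarrow> ip d z (\<lambda>_. 1) \<ge> 0)
          \<or> (\<forall>z. min_norm_interp (cntk_gap d q) (train_X x) train_Y z \<ge> 0
                   \<longleftrightarrow> ip d z (\<lambda>_. 1) \<le> 0)))"
proof (intro conjI impI)
  let ?mx = "\<lambda>j. - x j"
  have ippos: "ip d x x > 0"
  proof -
    have "ip d x x \<noteq> 0"
    proof
      assume "ip d x x = 0"
      then have "\<forall>i\<in>{..<d}. x i * x i = 0" unfolding ip_def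
        by (subst sum_nonneg_eq_0_iff[symmetric]) auto
      then show False using xnz by auto
    qed
    then show ?thesis using ip_self_nonneg[of d x] by simp
  qed
  have ipmm: "ip d ?mx ?mx = ip d x x" by (simp add: ip_neg_r ip_neg_l)
  have f1: "fc_ntk d x x - fc_ntk d x ?mx = 2 * ip d x x" by (rule fc_diff)
  have f2: "fc_ntk d ?mx ?mx - fc_ntk d ?mx x = 2 * ip d x x"
    using fc_diff[of d ?mx ?mx] unfolding neg_neg_fun ipmm .
  have fxx: "fc_ntk d x x = 2 * ip d x x" by (rule fc_self)
  have fmm: "fc_ntk d ?mx ?mx = 2 * ip d x x" using fc_self[of d ?mx] ipmm by simp
  have G: "gram (fc_ntk d) (train_X x) = (\<chi> i j. if i = j then 2 * ip d x x else 0)"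
  proof (subst vec_eq_iff, intro allI, subst vec_eq_iff, intro allI)
    fix i j :: 2
    show "gram (fc_ntk d) (train_X x) $ i $ j = (\<chi> i j. if i = j then 2 * ip d x x else 0) $ i $ j"
      using two_cases[of i] two_cases[of j] f1 f2 fxx fmm
      by (auto simp: gram_def train_X_def)
  qed
  have inv1: "invertible (gram (fc_ntk d) (train_X x))"
    unfolding G using ippos by (intro diag_inv) simp
  show "\<forall>z. min_norm_interp (fc_ntk d) (train_X x) train_Y z \<ge> 0 \<longleftrightarrow> ip d z x \<ge> 0"
  proof
    fix z
    have "min_norm_interp (fc_ntk d) (train_X x) train_Y z = 2 * ip d z x / (2 * ip d x x)"
      using interp2[OF inv1, of "2 * ip d x x" z] f1 f2 fc_diff[of d z x]
      unfolding tX0 tX1 by simp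
    then show "min_norm_interp (fc_ntk d) (train_X x) train_Y z \<ge> 0 \<longleftrightarrow> ip d z x \<ge> 0"
      using ippos by (simp add: zero_le_divide_iff)
  qed
next
  assume H: "1 \<le> q \<and> q \<le> d \<and> invertible (gram (cntk_gap d q) (train_X x))"
  let ?mx = "\<lambda>j. - x j"
  define S where "S = (\<Sum>i<d. x i)"
  define c where "c = 2 * real q * S * S / (real d)^2"
  have c1: "cntk_gap d q x x - cntk_gap d q x ?mx = c"
    unfolding c_def S_def by (rule cntk_diff)
  have c2: "cntk_gap d q ?mx ?mx - cntk_gap d q ?mx x = c"
    using cntk_diff[of d q ?mx ?mx] unfolding neg_neg_fun c_def S_def by (simp add: sum_negf)
  have c1': "cntk_gap d q (train_X x 0) (train_X x 0) - cntk_gap d q (train_X x 0) (train_X x 1) = c"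
    using c1 unfolding tX0 tX1 .
  have c2': "cntk_gap d q (train_X x 1) (train_X x 1) - cntk_gap d q (train_X x 1) (train_X x 0) = c"
    using c2 unfolding tX0 tX1 .
  have inv: "invertible (gram (cntk_gap d q) (train_X x))" using H by blast
  note I0 = interp2[of "cntk_gap d q" "train_X x" c, OF inv c1' c2']
  have cnz: "c \<noteq> 0" using I0 by blast
  have I2: "min_norm_interp (cntk_gap d q) (train_X x) train_Y z
       = (cntk_gap d q z x - cntk_gap d q z ?mx) / c" for z
    using conjunct2[OF I0[of z]] unfolding tX0 tX1 .
  have Snz: "S \<noteq> 0"
  proof
    assume "S = 0"
    then have "c = 0" unfolding c_def by simp
    then show False using cnz by simp
  qed
  have qd: "2 * real q / (real d)^2 > 0" using H by simp
  have cpos: "c > 0"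
  proof -
    have "c = (2 * real q / (real d)^2) * (S * S)" unfolding c_def by simp
    moreover have "S * S > 0" using Snz by (simp add: zero_less_mult_iff less_le not_le)
    ultimately show ?thesis using qd by (metis mult_pos_pos)
  qed
  have gz: "min_norm_interp (cntk_gap d q) (train_X x) train_Y z \<ge> 0 \<longleftrightarrow> ip d z (\<lambda>_. 1) * S \<ge> 0"
    for z
  proof -
    have Sz: "ip d z (\<lambda>_. 1) = (\<Sum>i<d. z i)" by (simp add: ip_def)
    have N: "cntk_gap d q z x - cntk_gap d q z ?mx = (2 * real q / (real d)^2) * (ip d z (\<lambda>_. 1) * S)"
      unfolding cntk_diff Sz S_def by simp
    show ?thesis unfolding I2 N by (rule sign_helper[OF cpos qd])
  qed
  show "(\<forall>z. min_norm_interp (cntk_gap d q) (train_X x) train_Y z \<ge> 0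
                   \<longleftrightarrow> ip d z (\<lambda>_. 1) \<ge> 0)
          \<or> (\<forall>z. min_norm_interp (cntk_gap d q) (train_X x) train_Y z \<ge> 0
                   \<longleftrightarrow> ip d z (\<lambda>_. 1) \<le> 0)"
  proof (cases "S > 0")
    case True
    then show ?thesis using gz by (simp add: zero_le_mult_iff)
  next
    case False
    then have "S < 0" using Snz by simp
    then show ?thesis using gz by (simp add: zero_le_mult_iff)
  qed
qed
end
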